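(* Let $M$ be a Rickart right $R$-module. If $M$ is reduced, or rigid, or abelian, or semicommutative, or symmetric, then $M$ is a centrally endo-AIP module.
   Context: Let $S=\mathrm{End}_R(M)$. $M$ is Rickart if $\ker\phi$ is a direct summand of $M$ for every $\phi\in S$. $M$ is reduced if for $\phi\in S$, $m\in M$, $\phi^2(m)=0$ implies $\phi(Sm)=0$ (equivalently $\phi(m)=0$ implies $\mathrm{Im}(\phi)\cap Sm=0$). $M$ is rigid if $\psi^2(m)=0$ implies $\psi(m)=0$ for all $\psi\in S$, $m\in M$. $M$ is abelian if every idempotent of $S$ is central. $M$ is semicommutative if $\psi(m)=0$ implies $\psi(Sm)=0$. $M$ is symmetric if $\phi\psi(m)=0$ implies $\psi\phi(m)=0$ for all $\phi,\psi\in S$, $m\in M$. For $N\le M$, $l_S(N)=\{\phi\in S:\phi(N)=0\}$. An ideal $I$ of $S$ is centrally s-unital if for every $a\in I$ there is $z\in I$ central in $S$ with $az=a$. $M$ is centrally endo-AIP if $l_S(N)$ is a centrally s-unital ideal of $S$ for every fully invariant submodule $N$ of $M$. *)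

theory Defs
  imports "HOL-Algebra.Ring" "HOL-Algebra.Ideal"
begin

text \<open>A right R-module: an abelian group M (only its additive structure is used)
  together with a right action act m r of the ring R.\<close>

definition right_module ::
  "('a, 'b) ring_scheme \<Rightarrow> ('c, 'd) ring_scheme \<Rightarrow> ('c \<Rightarrow> 'a \<Rightarrow> 'c) \<Rightarrow> bool" where
  "right_module R M act \<longleftrightarrow> ring R \<and> abelian_group M \<and>
     (\<forall>m\<in>carrier M. \<forall>r\<in>carrier R. act m r \<in> carrier M) \<and>
     (\<forall>m\<in>carrier M. \<forall>n\<in>carrier M. \<forall>r\<in>carrier R.
        act (m \<oplus>\<^bsub>M\<^esub> n) r = act m r \<oplus>\<^bsub>M\<^esub> act n r) \<and>
     (\<forall>m\<in>carrier M. \<forall>r\<in>carrier R. \<forall>s\<in>carrier R.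
        act m (r \<oplus>\<^bsub>R\<^esub> s) = act m r \<oplus>\<^bsub>M\<^esub> act m s) \<and>
     (\<forall>m\<in>carrier M. \<forall>r\<in>carrier R. \<forall>s\<in>carrier R.
        act m (r \<otimes>\<^bsub>R\<^esub> s) = act (act m r) s) \<and>
     (\<forall>m\<in>carrier M. act m \<one>\<^bsub>R\<^esub> = m)"

definition endos ::
  "('a, 'b) ring_scheme \<Rightarrow> ('c, 'd) ring_scheme \<Rightarrow> ('c \<Rightarrow> 'a \<Rightarrow> 'c) \<Rightarrow> ('c \<Rightarrow> 'c) set" where
  "endos R M act = {f. f \<in> carrier M \<rightarrow>\<^sub>E carrier M \<and>
     (\<forall>m\<in>carrier M. \<forall>n\<in>carrier M. f (m \<oplus>\<^bsub>M\<^esub> n) = f m \<oplus>\<^bsub>M\<^esub> f n) \<and>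
     (\<forall>m\<in>carrier M. \<forall>r\<in>carrier R. f (act m r) = act (f m) r)}"

text \<open>The endomorphism ring S = End_R(M), multiplication is composition
  (f \<otimes> g = f \<circ> g, endomorphisms act on the left).\<close>

definition End_ring ::
  "('a, 'b) ring_scheme \<Rightarrow> ('c, 'd) ring_scheme \<Rightarrow> ('c \<Rightarrow> 'a \<Rightarrow> 'c) \<Rightarrow> ('c \<Rightarrow> 'c) ring" where
  "End_ring R M act = \<lparr> carrier = endos R M act,
      monoid.mult = (\<lambda>f g. compose (carrier M) f g),
      one = (\<lambda>x\<in>carrier M. x),
      zero = (\<lambda>x\<in>carrier M. \<zero>\<^bsub>M\<^esub>),
      add = (\<lambda>f g. \<lambda>x\<in>carrier M. f x \<oplus>\<^bsub>M\<^esub> g x) \<rparr>"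

definition submod ::
  "('a, 'b) ring_scheme \<Rightarrow> ('c, 'd) ring_scheme \<Rightarrow> ('c \<Rightarrow> 'a \<Rightarrow> 'c) \<Rightarrow> 'c set \<Rightarrow> bool" where
  "submod R M act N \<longleftrightarrow> N \<subseteq> carrier M \<and> \<zero>\<^bsub>M\<^esub> \<in> N \<and>
     (\<forall>m\<in>N. \<forall>n\<in>N. m \<oplus>\<^bsub>M\<^esub> n \<in> N) \<and> (\<forall>m\<in>N. \<ominus>\<^bsub>M\<^esub> m \<in> N) \<and>
     (\<forall>m\<in>N. \<forall>r\<in>carrier R. act m r \<in> N)"

definition direct_summand ::
  "('a, 'b) ring_scheme \<Rightarrow> ('c, 'd) ring_scheme \<Rightarrow> ('c \<Rightarrow> 'a \<Rightarrow> 'c) \<Rightarrow> 'c set \<Rightarrow> bool" where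
  "direct_summand R M act K \<longleftrightarrow> submod R M act K \<and>
     (\<exists>N. submod R M act N \<and> K \<inter> N = {\<zero>\<^bsub>M\<^esub>} \<and>
          (\<forall>m\<in>carrier M. \<exists>a\<in>K. \<exists>b\<in>N. m = a \<oplus>\<^bsub>M\<^esub> b))"

definition ker_endo :: "('c, 'd) ring_scheme \<Rightarrow> ('c \<Rightarrow> 'c) \<Rightarrow> 'c set" where
  "ker_endo M f = {m \<in> carrier M. f m = \<zero>\<^bsub>M\<^esub>}"

definition rickart_mod where
  "rickart_mod R M act \<longleftrightarrow> (\<forall>\<phi>\<in>endos R M act. direct_summand R M act (ker_endo M \<phi>))"

definition reduced_mod where
  "reduced_mod R M act \<longleftrightarrow> (\<forall>\<phi>\<in>endos R M act. \<forall>m\<in>carrier M.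
     \<phi> (\<phi> m) = \<zero>\<^bsub>M\<^esub> \<longrightarrow> (\<forall>\<psi>\<in>endos R M act. \<phi> (\<psi> m) = \<zero>\<^bsub>M\<^esub>))"

definition rigid_mod where
  "rigid_mod R M act \<longleftrightarrow> (\<forall>\<psi>\<in>endos R M act. \<forall>m\<in>carrier M.
     \<psi> (\<psi> m) = \<zero>\<^bsub>M\<^esub> \<longrightarrow> \<psi> m = \<zero>\<^bsub>M\<^esub>)"

definition abelian_mod where
  "abelian_mod R M act \<longleftrightarrow> (\<forall>e\<in>carrier (End_ring R M act).
     e \<otimes>\<^bsub>End_ring R M act\<^esub> e = e \<longrightarrow>
     (\<forall>f\<in>carrier (End_ring R M act).
        e \<otimes>\<^bsub>End_ring R M act\<^esub> f = f \<otimes>\<^bsub>End_ring R M act\<^esub> e))"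

definition semicommutative_mod where
  "semicommutative_mod R M act \<longleftrightarrow> (\<forall>\<psi>\<in>endos R M act. \<forall>m\<in>carrier M.
     \<psi> m = \<zero>\<^bsub>M\<^esub> \<longrightarrow> (\<forall>\<phi>\<in>endos R M act. \<psi> (\<phi> m) = \<zero>\<^bsub>M\<^esub>))"

definition symmetric_mod where
  "symmetric_mod R M act \<longleftrightarrow> (\<forall>\<phi>\<in>endos R M act. \<forall>\<psi>\<in>endos R M act. \<forall>m\<in>carrier M.
     \<phi> (\<psi> m) = \<zero>\<^bsub>M\<^esub> \<longrightarrow> \<psi> (\<phi> m) = \<zero>\<^bsub>M\<^esub>)"

definition fully_invariant where
  "fully_invariant R M act N \<longleftrightarrow> submod R M act N \<and> (\<forall>\<phi>\<in>endos R M act. \<phi> ` N \<subseteq> N)"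

definition left_annihilator where
  "left_annihilator R M act N = {\<phi> \<in> endos R M act. \<forall>n\<in>N. \<phi> n = \<zero>\<^bsub>M\<^esub>}"

definition centrally_s_unital :: "('e, 'f) ring_scheme \<Rightarrow> 'e set \<Rightarrow> bool" where
  "centrally_s_unital S I \<longleftrightarrow> ideal I S \<and>
     (\<forall>a\<in>I. \<exists>z\<in>I. (\<forall>s\<in>carrier S. z \<otimes>\<^bsub>S\<^esub> s = s \<otimes>\<^bsub>S\<^esub> z) \<and> a \<otimes>\<^bsub>S\<^esub> z = a)"

definition centrally_endo_AIP where
  "centrally_endo_AIP R M act \<longleftrightarrow> (\<forall>N. fully_invariant R M act N \<longrightarrow>
     centrally_s_unital (End_ring R M act) (left_annihilator R M act N))"

end

theory Submission imports Defs begin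

locale rmod =
  fixes R :: "('a, 'b) ring_scheme" and M :: "('c, 'd) ring_scheme" and act :: "'c \<Rightarrow> 'a \<Rightarrow> 'c"
  assumes rm: "right_module R M act"
begin

sublocale M: abelian_group M using rm unfolding right_module_def by auto

lemma act_closed: "m \<in> carrier M \<Longrightarrow> r \<in> carrier R \<Longrightarrow> act m r \<in> carrier M"
  using rm unfolding right_module_def by auto
lemma act_add: "m \<in> carrier M \<Longrightarrow> n \<in> carrier M \<Longrightarrow> r \<in> carrier R \<Longrightarrow>
   act (m \<oplus>\<^bsub>M\<^esub> n) r = act m r \<oplus>\<^bsub>M\<^esub> act n r"
  using rm unfolding right_module_def by auto

lemma act_zero: "r \<in> carrier R \<Longrightarrow> act \<zero>\<^bsub>M\<^esub> r = \<zero>\<^bsub>M\<^esub>"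
proof -
  assume r: "r \<in> carrier R"
  have "act \<zero>\<^bsub>M\<^esub> r = act \<zero>\<^bsub>M\<^esub> r \<oplus>\<^bsub>M\<^esub> act \<zero>\<^bsub>M\<^esub> r"
    using act_add[of "\<zero>\<^bsub>M\<^esub>" "\<zero>\<^bsub>M\<^esub>" r] r by simp
  then show ?thesis using act_closed[OF M.zero_closed r]
    using M.add.l_cancel_one' by (metis M.zero_closed)
qed

lemma act_neg: "m \<in> carrier M \<Longrightarrow> r \<in> carrier R \<Longrightarrow> act (\<ominus>\<^bsub>M\<^esub> m) r = \<ominus>\<^bsub>M\<^esub> act m r"
proof -
  assume m: "m \<in> carrier M" and r: "r \<in> carrier R"
  have "act (\<ominus>\<^bsub>M\<^esub> m) r \<oplus>\<^bsub>M\<^esub> act m r = \<zero>\<^bsub>M\<^esub>"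
    using act_add[of "\<ominus>\<^bsub>M\<^esub> m" m r] m r act_zero by (simp add: M.l_neg)
  then show ?thesis using m r act_closed
    by (metis M.a_inv_closed M.minus_equality)
qed

abbreviation S where "S \<equiv> End_ring R M act"

lemma S_simps: "carrier S = endos R M act" "f \<otimes>\<^bsub>S\<^esub> g = compose (carrier M) f g"
  "\<one>\<^bsub>S\<^esub> = (\<lambda>x\<in>carrier M. x)" "\<zero>\<^bsub>S\<^esub> = (\<lambda>x\<in>carrier M. \<zero>\<^bsub>M\<^esub>)"
  "f \<oplus>\<^bsub>S\<^esub> g = (\<lambda>x\<in>carrier M. f x \<oplus>\<^bsub>M\<^esub> g x)"
  by (simp_all add: End_ring_def)

lemma endo_closed: "f \<in> endos R M act \<Longrightarrow> m \<in> carrier M \<Longrightarrow> f m \<in> carrier M"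
  unfolding endos_def by auto
lemma endo_add: "f \<in> endos R M act \<Longrightarrow> m \<in> carrier M \<Longrightarrow> n \<in> carrier M \<Longrightarrow> f (m \<oplus>\<^bsub>M\<^esub> n) = f m \<oplus>\<^bsub>M\<^esub> f n"
  unfolding endos_def by auto
lemma endo_act: "f \<in> endos R M act \<Longrightarrow> m \<in> carrier M \<Longrightarrow> r \<in> carrier R \<Longrightarrow> f (act m r) = act (f m) r"
  unfolding endos_def by auto
lemma endo_ext: "f \<in> endos R M act \<Longrightarrow> m \<notin> carrier M \<Longrightarrow> f m = undefined"
  unfolding endos_def by auto
lemma endo_eqI: "f \<in> endos R M act \<Longrightarrow> g \<in> endos R M act \<Longrightarrow> (\<And>m. m \<in> carrier M \<Longrightarrow> f m = g m) \<Longrightarrow> f = g"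
  by (metis endo_ext ext)
lemma endo_zero: "f \<in> endos R M act \<Longrightarrow> f \<zero>\<^bsub>M\<^esub> = \<zero>\<^bsub>M\<^esub>"
proof -
  assume f: "f \<in> endos R M act"
  have "f \<zero>\<^bsub>M\<^esub> = f \<zero>\<^bsub>M\<^esub> \<oplus>\<^bsub>M\<^esub> f \<zero>\<^bsub>M\<^esub>" using endo_add[OF f, of "\<zero>\<^bsub>M\<^esub>" "\<zero>\<^bsub>M\<^esub>"] by simp
  then show ?thesis using endo_closed[OF f M.zero_closed]
    using M.add.l_cancel_one' by (metis M.zero_closed)
qed
lemma endo_neg: "f \<in> endos R M act \<Longrightarrow> m \<in> carrier M \<Longrightarrow> f (\<ominus>\<^bsub>M\<^esub> m) = \<ominus>\<^bsub>M\<^esub> f m"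
proof -
  assume f: "f \<in> endos R M act" and m: "m \<in> carrier M"
  have "f (\<ominus>\<^bsub>M\<^esub> m) \<oplus>\<^bsub>M\<^esub> f m = \<zero>\<^bsub>M\<^esub>"
    using endo_add[OF f, of "\<ominus>\<^bsub>M\<^esub> m" m] m endo_zero[OF f] by (simp add: M.l_neg)
  then show ?thesis using m endo_closed[OF f]
    by (metis M.a_inv_closed M.minus_equality)
qed

lemma endosI:
  assumes "\<And>m. m \<in> carrier M \<Longrightarrow> f m \<in> carrier M" "\<And>m. m \<notin> carrier M \<Longrightarrow> f m = undefined"
   "\<And>m n. m \<in> carrier M \<Longrightarrow> n \<in> carrier M \<Longrightarrow> f (m \<oplus>\<^bsub>M\<^esub> n) = f m \<oplus>\<^bsub>M\<^esub> f n"
   "\<And>m r. m \<in> carrier M \<Longrightarrow> r \<in> carrier R \<Longrightarrow> f (act m r) = act (f m) r"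
  shows "f \<in> endos R M act"
  using assms unfolding endos_def by auto

lemma add_endo: "f \<in> endos R M act \<Longrightarrow> g \<in> endos R M act \<Longrightarrow> (\<lambda>x\<in>carrier M. f x \<oplus>\<^bsub>M\<^esub> g x) \<in> endos R M act"
  apply (rule endosI)
  apply (auto simp: endo_closed endo_add endo_act act_closed act_add M.a_ac)
  done

lemma neg_endo: "f \<in> endos R M act \<Longrightarrow> (\<lambda>x\<in>carrier M. \<ominus>\<^bsub>M\<^esub> f x) \<in> endos R M act"
  apply (rule endosI)
  apply (auto simp: endo_closed endo_add endo_act act_closed act_neg M.minus_add)
  done

lemma zero_endo: "(\<lambda>x\<in>carrier M. \<zero>\<^bsub>M\<^esub>) \<in> endos R M act"
  by (rule endosI) (auto simp: act_closed act_zero)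

lemma one_endo: "(\<lambda>x\<in>carrier M. x) \<in> endos R M act"
  by (rule endosI) (auto simp: act_closed)

lemma comp_endo: "f \<in> endos R M act \<Longrightarrow> g \<in> endos R M act \<Longrightarrow> compose (carrier M) f g \<in> endos R M act"
  by (rule endosI) (auto simp: compose_def endo_closed endo_add endo_act act_closed)

lemma S_ring: "ring S"
proof (rule ringI)
  show "abelian_group S"
  proof (rule abelian_groupI)
    fix x assume x: "x \<in> carrier S"
    show "\<exists>y\<in>carrier S. y \<oplus>\<^bsub>S\<^esub> x = \<zero>\<^bsub>S\<^esub>"
      apply (rule bexI[of _ "\<lambda>m\<in>carrier M. \<ominus>\<^bsub>M\<^esub> x m"])
      using x by (auto simp: S_simps neg_endo endo_closed M.l_neg)
  qed (auto simp: S_simps add_endo zero_endo endo_closed M.a_ac fun_eq_iff endo_ext)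
  show "monoid S"
    by (rule monoidI) (auto simp: S_simps one_endo comp_endo; auto simp: fun_eq_iff compose_def endo_ext endo_closed)+
qed (auto simp: S_simps add_endo comp_endo; auto simp: fun_eq_iff compose_def endo_ext endo_closed endo_add)+


sublocale S: ring S by (rule S_ring)

lemma S_mult_eval: "m \<in> carrier M \<Longrightarrow> (f \<otimes>\<^bsub>S\<^esub> g) m = f (g m)"
  by (simp add: S_simps compose_def)
lemma S_zero_eval: "m \<in> carrier M \<Longrightarrow> \<zero>\<^bsub>S\<^esub> m = \<zero>\<^bsub>M\<^esub>"
  by (simp add: S_simps)
lemma S_one_eval: "m \<in> carrier M \<Longrightarrow> \<one>\<^bsub>S\<^esub> m = m"
  by (simp add: S_simps)

lemma S_zeroI: "f \<in> carrier S \<Longrightarrow> (\<And>m. m \<in> carrier M \<Longrightarrow> f m = \<zero>\<^bsub>M\<^esub>) \<Longrightarrow> f = \<zero>\<^bsub>S\<^esub>"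
  by (rule endo_eqI) (auto simp: S_simps zero_endo)

lemma S_neg: "f \<in> carrier S \<Longrightarrow> \<ominus>\<^bsub>S\<^esub> f = (\<lambda>x\<in>carrier M. \<ominus>\<^bsub>M\<^esub> f x)"
  apply (rule S.minus_equality)
  apply (auto simp: S_simps neg_endo endo_closed M.l_neg fun_eq_iff)
  done

lemma idem_ortho:
  assumes e: "e \<in> carrier S" and ee: "e \<otimes>\<^bsub>S\<^esub> e = e"
  shows "e \<otimes>\<^bsub>S\<^esub> (\<one>\<^bsub>S\<^esub> \<ominus>\<^bsub>S\<^esub> e) = \<zero>\<^bsub>S\<^esub>"
    "(\<one>\<^bsub>S\<^esub> \<ominus>\<^bsub>S\<^esub> e) \<otimes>\<^bsub>S\<^esub> e = \<zero>\<^bsub>S\<^esub>"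
  using e ee by (simp_all add: S.minus_eq S.r_distr S.l_distr S.r_minus S.l_minus S.r_neg)

lemma S_diff0: "a \<ominus>\<^bsub>S\<^esub> b = \<zero>\<^bsub>S\<^esub> \<Longrightarrow> a \<in> carrier S \<Longrightarrow> b \<in> carrier S \<Longrightarrow> a = b"
  by (metis S.minus_eq S.minus_equality S.minus_minus S.a_inv_closed S.a_comm)

lemma abelianI:
  assumes H: "\<And>e f. e \<in> carrier S \<Longrightarrow> e \<otimes>\<^bsub>S\<^esub> e = e \<Longrightarrow> f \<in> carrier S \<Longrightarrow>
     (\<one>\<^bsub>S\<^esub> \<ominus>\<^bsub>S\<^esub> e) \<otimes>\<^bsub>S\<^esub> f \<otimes>\<^bsub>S\<^esub> e = \<zero>\<^bsub>S\<^esub> \<and>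
     e \<otimes>\<^bsub>S\<^esub> f \<otimes>\<^bsub>S\<^esub> (\<one>\<^bsub>S\<^esub> \<ominus>\<^bsub>S\<^esub> e) = \<zero>\<^bsub>S\<^esub>"
  shows "abelian_mod R M act"
  unfolding abelian_mod_def
proof (intro ballI impI)
  fix e f assume e: "e \<in> carrier S" and ee: "e \<otimes>\<^bsub>S\<^esub> e = e" and f: "f \<in> carrier S"
  from H[OF e ee f] have h1: "(\<one>\<^bsub>S\<^esub> \<ominus>\<^bsub>S\<^esub> e) \<otimes>\<^bsub>S\<^esub> f \<otimes>\<^bsub>S\<^esub> e = \<zero>\<^bsub>S\<^esub>"
    and h2: "e \<otimes>\<^bsub>S\<^esub> f \<otimes>\<^bsub>S\<^esub> (\<one>\<^bsub>S\<^esub> \<ominus>\<^bsub>S\<^esub> e) = \<zero>\<^bsub>S\<^esub>" by auto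
  have "(\<one>\<^bsub>S\<^esub> \<ominus>\<^bsub>S\<^esub> e) \<otimes>\<^bsub>S\<^esub> f \<otimes>\<^bsub>S\<^esub> e = f \<otimes>\<^bsub>S\<^esub> e \<ominus>\<^bsub>S\<^esub> e \<otimes>\<^bsub>S\<^esub> f \<otimes>\<^bsub>S\<^esub> e"
    using e f by (simp add: S.minus_eq S.l_distr S.l_minus)
  with h1 have a: "f \<otimes>\<^bsub>S\<^esub> e = e \<otimes>\<^bsub>S\<^esub> f \<otimes>\<^bsub>S\<^esub> e"
    using e f by (metis S.m_closed S_diff0)
  have "e \<otimes>\<^bsub>S\<^esub> f \<otimes>\<^bsub>S\<^esub> (\<one>\<^bsub>S\<^esub> \<ominus>\<^bsub>S\<^esub> e) = e \<otimes>\<^bsub>S\<^esub> f \<ominus>\<^bsub>S\<^esub> e \<otimes>\<^bsub>S\<^esub> f \<otimes>\<^bsub>S\<^esub> e"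
    using e f by (simp add: S.minus_eq S.r_distr S.r_minus)
  with h2 have b: "e \<otimes>\<^bsub>S\<^esub> f = e \<otimes>\<^bsub>S\<^esub> f \<otimes>\<^bsub>S\<^esub> e"
    using e f by (metis S.m_closed S_diff0)
  show "e \<otimes>\<^bsub>S\<^esub> f = f \<otimes>\<^bsub>S\<^esub> e" using a b by simp
qed

lemma rigid_nil: assumes rg: "rigid_mod R M act" and x: "x \<in> carrier S" and xx: "x \<otimes>\<^bsub>S\<^esub> x = \<zero>\<^bsub>S\<^esub>"
  shows "x = \<zero>\<^bsub>S\<^esub>"
proof (rule S_zeroI[OF x])
  fix m assume m: "m \<in> carrier M"
  have "x (x m) = \<zero>\<^bsub>M\<^esub>" using xx m S_mult_eval[OF m, of x x] S_zero_eval[OF m] by simp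
  then show "x m = \<zero>\<^bsub>M\<^esub>" using rg x m unfolding rigid_mod_def S_simps by blast
qed

lemma rigid_abelian: assumes rg: "rigid_mod R M act" shows "abelian_mod R M act"
proof (rule abelianI)
  fix e f assume e: "e \<in> carrier S" and ee: "e \<otimes>\<^bsub>S\<^esub> e = e" and f: "f \<in> carrier S"
  note o = idem_ortho[OF e ee]
  have c: "\<one>\<^bsub>S\<^esub> \<ominus>\<^bsub>S\<^esub> e \<in> carrier S" using e by simp
  have "((\<one>\<^bsub>S\<^esub> \<ominus>\<^bsub>S\<^esub> e) \<otimes>\<^bsub>S\<^esub> f \<otimes>\<^bsub>S\<^esub> e) \<otimes>\<^bsub>S\<^esub> ((\<one>\<^bsub>S\<^esub> \<ominus>\<^bsub>S\<^esub> e) \<otimes>\<^bsub>S\<^esub> f \<otimes>\<^bsub>S\<^esub> e)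
     = (\<one>\<^bsub>S\<^esub> \<ominus>\<^bsub>S\<^esub> e) \<otimes>\<^bsub>S\<^esub> f \<otimes>\<^bsub>S\<^esub> (e \<otimes>\<^bsub>S\<^esub> (\<one>\<^bsub>S\<^esub> \<ominus>\<^bsub>S\<^esub> e)) \<otimes>\<^bsub>S\<^esub> f \<otimes>\<^bsub>S\<^esub> e"
    using c e f by (simp add: S.m_assoc)
  also have "\<dots> = \<zero>\<^bsub>S\<^esub>" using o c e f by simp
  finally have 1: "(\<one>\<^bsub>S\<^esub> \<ominus>\<^bsub>S\<^esub> e) \<otimes>\<^bsub>S\<^esub> f \<otimes>\<^bsub>S\<^esub> e = \<zero>\<^bsub>S\<^esub>"
    by (meson rigid_nil[OF rg] c e f S.m_closed)
  have "(e \<otimes>\<^bsub>S\<^esub> f \<otimes>\<^bsub>S\<^esub> (\<one>\<^bsub>S\<^esub> \<ominus>\<^bsub>S\<^esub> e)) \<otimes>\<^bsub>S\<^esub> (e \<otimes>\<^bsub>S\<^esub> f \<otimes>\<^bsub>S\<^esub> (\<one>\<^bsub>S\<^esub> \<ominus>\<^bsub>S\<^esub> e))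
     = e \<otimes>\<^bsub>S\<^esub> f \<otimes>\<^bsub>S\<^esub> ((\<one>\<^bsub>S\<^esub> \<ominus>\<^bsub>S\<^esub> e) \<otimes>\<^bsub>S\<^esub> e) \<otimes>\<^bsub>S\<^esub> f \<otimes>\<^bsub>S\<^esub> (\<one>\<^bsub>S\<^esub> \<ominus>\<^bsub>S\<^esub> e)"
    using c e f by (simp add: S.m_assoc)
  also have "\<dots> = \<zero>\<^bsub>S\<^esub>" using o c e f by simp
  finally have 2: "e \<otimes>\<^bsub>S\<^esub> f \<otimes>\<^bsub>S\<^esub> (\<one>\<^bsub>S\<^esub> \<ominus>\<^bsub>S\<^esub> e) = \<zero>\<^bsub>S\<^esub>"
    by (meson rigid_nil[OF rg] c e f S.m_closed)
  show "(\<one>\<^bsub>S\<^esub> \<ominus>\<^bsub>S\<^esub> e) \<otimes>\<^bsub>S\<^esub> f \<otimes>\<^bsub>S\<^esub> e = \<zero>\<^bsub>S\<^esub> \<and>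
     e \<otimes>\<^bsub>S\<^esub> f \<otimes>\<^bsub>S\<^esub> (\<one>\<^bsub>S\<^esub> \<ominus>\<^bsub>S\<^esub> e) = \<zero>\<^bsub>S\<^esub>" using 1 2 by simp
qed

lemma reduced_rigid: assumes "reduced_mod R M act" shows "rigid_mod R M act"
  unfolding rigid_mod_def
proof (intro ballI impI)
  fix \<psi> m assume p: "\<psi> \<in> endos R M act" and m: "m \<in> carrier M" and h: "\<psi> (\<psi> m) = \<zero>\<^bsub>M\<^esub>"
  have "\<psi> ((\<lambda>x\<in>carrier M. x) m) = \<zero>\<^bsub>M\<^esub>"
    using assms p m h one_endo unfolding reduced_mod_def by blast
  then show "\<psi> m = \<zero>\<^bsub>M\<^esub>" using m by simp
qed

lemma semicomm_abelian: assumes sc: "semicommutative_mod R M act" shows "abelian_mod R M act"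
proof -
  have key: "a \<otimes>\<^bsub>S\<^esub> f \<otimes>\<^bsub>S\<^esub> b = \<zero>\<^bsub>S\<^esub>"
    if a: "a \<in> carrier S" and b: "b \<in> carrier S" and f: "f \<in> carrier S" and ab: "a \<otimes>\<^bsub>S\<^esub> b = \<zero>\<^bsub>S\<^esub>" for a b f
  proof (rule S_zeroI)
    show "a \<otimes>\<^bsub>S\<^esub> f \<otimes>\<^bsub>S\<^esub> b \<in> carrier S" using a b f by simp
    fix m assume m: "m \<in> carrier M"
    have bm: "b m \<in> carrier M" using b m endo_closed S_simps by auto
    have "a (b m) = \<zero>\<^bsub>M\<^esub>" using ab m S_mult_eval[OF m, of a b] S_zero_eval[OF m] by simp
    then have "a (f (b m)) = \<zero>\<^bsub>M\<^esub>" using sc a f bm unfolding semicommutative_mod_def S_simps by blast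
    then show "(a \<otimes>\<^bsub>S\<^esub> f \<otimes>\<^bsub>S\<^esub> b) m = \<zero>\<^bsub>M\<^esub>" using m bm by (simp add: S_mult_eval)
  qed
  show ?thesis
  proof (rule abelianI)
    fix e f assume e: "e \<in> carrier S" and ee: "e \<otimes>\<^bsub>S\<^esub> e = e" and f: "f \<in> carrier S"
    note o = idem_ortho[OF e ee]
    show "(\<one>\<^bsub>S\<^esub> \<ominus>\<^bsub>S\<^esub> e) \<otimes>\<^bsub>S\<^esub> f \<otimes>\<^bsub>S\<^esub> e = \<zero>\<^bsub>S\<^esub> \<and>
     e \<otimes>\<^bsub>S\<^esub> f \<otimes>\<^bsub>S\<^esub> (\<one>\<^bsub>S\<^esub> \<ominus>\<^bsub>S\<^esub> e) = \<zero>\<^bsub>S\<^esub>"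
      using key o e f by simp
  qed
qed

lemma symm_abelian: assumes sy: "symmetric_mod R M act" shows "abelian_mod R M act"
proof -
  have key: "b \<otimes>\<^bsub>S\<^esub> a = \<zero>\<^bsub>S\<^esub>"
    if a: "a \<in> carrier S" and b: "b \<in> carrier S" and ab: "a \<otimes>\<^bsub>S\<^esub> b = \<zero>\<^bsub>S\<^esub>" for a b
  proof (rule S_zeroI)
    show "b \<otimes>\<^bsub>S\<^esub> a \<in> carrier S" using a b by simp
    fix m assume m: "m \<in> carrier M"
    have "a (b m) = \<zero>\<^bsub>M\<^esub>" using ab m S_mult_eval[OF m, of a b] S_zero_eval[OF m] by simp
    then have "b (a m) = \<zero>\<^bsub>M\<^esub>" using sy a b m unfolding symmetric_mod_def S_simps by blast
    then show "(b \<otimes>\<^bsub>S\<^esub> a) m = \<zero>\<^bsub>M\<^esub>" using m by (simp add: S_mult_eval)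
  qed
  show ?thesis
  proof (rule abelianI)
    fix e f assume e: "e \<in> carrier S" and ee: "e \<otimes>\<^bsub>S\<^esub> e = e" and f: "f \<in> carrier S"
    note o = idem_ortho[OF e ee]
    have c: "\<one>\<^bsub>S\<^esub> \<ominus>\<^bsub>S\<^esub> e \<in> carrier S" using e by simp
    have "e \<otimes>\<^bsub>S\<^esub> ((\<one>\<^bsub>S\<^esub> \<ominus>\<^bsub>S\<^esub> e) \<otimes>\<^bsub>S\<^esub> f) = \<zero>\<^bsub>S\<^esub>"
      using o c e f by (simp flip: S.m_assoc)
    then have 1: "(\<one>\<^bsub>S\<^esub> \<ominus>\<^bsub>S\<^esub> e) \<otimes>\<^bsub>S\<^esub> f \<otimes>\<^bsub>S\<^esub> e = \<zero>\<^bsub>S\<^esub>"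
      using key[of e "(\<one>\<^bsub>S\<^esub> \<ominus>\<^bsub>S\<^esub> e) \<otimes>\<^bsub>S\<^esub> f"] c e f by simp
    have "(\<one>\<^bsub>S\<^esub> \<ominus>\<^bsub>S\<^esub> e) \<otimes>\<^bsub>S\<^esub> (e \<otimes>\<^bsub>S\<^esub> f) = \<zero>\<^bsub>S\<^esub>"
      using o c e f by (simp flip: S.m_assoc)
    then have 2: "e \<otimes>\<^bsub>S\<^esub> f \<otimes>\<^bsub>S\<^esub> (\<one>\<^bsub>S\<^esub> \<ominus>\<^bsub>S\<^esub> e) = \<zero>\<^bsub>S\<^esub>"
      using key[of "\<one>\<^bsub>S\<^esub> \<ominus>\<^bsub>S\<^esub> e" "e \<otimes>\<^bsub>S\<^esub> f"] c e f by simp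
    show "(\<one>\<^bsub>S\<^esub> \<ominus>\<^bsub>S\<^esub> e) \<otimes>\<^bsub>S\<^esub> f \<otimes>\<^bsub>S\<^esub> e = \<zero>\<^bsub>S\<^esub> \<and>
     e \<otimes>\<^bsub>S\<^esub> f \<otimes>\<^bsub>S\<^esub> (\<one>\<^bsub>S\<^esub> \<ominus>\<^bsub>S\<^esub> e) = \<zero>\<^bsub>S\<^esub>" using 1 2 by simp
  qed
qed


lemma grp_aux: "k1 \<in> carrier M \<Longrightarrow> k2 \<in> carrier M \<Longrightarrow> b1 \<in> carrier M \<Longrightarrow> b2 \<in> carrier M \<Longrightarrow>
  k1 \<oplus>\<^bsub>M\<^esub> b1 = k2 \<oplus>\<^bsub>M\<^esub> b2 \<Longrightarrow> k1 \<oplus>\<^bsub>M\<^esub> \<ominus>\<^bsub>M\<^esub> k2 = b2 \<oplus>\<^bsub>M\<^esub> \<ominus>\<^bsub>M\<^esub> b1"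
  by (smt (verit, best) M.add.inv_closed M.add.m_assoc M.add.m_closed M.add.m_comm M.r_neg2)
lemma grp_aux2: "b1 \<in> carrier M \<Longrightarrow> b2 \<in> carrier M \<Longrightarrow> b2 \<oplus>\<^bsub>M\<^esub> \<ominus>\<^bsub>M\<^esub> b1 = \<zero>\<^bsub>M\<^esub> \<Longrightarrow> b1 = b2"
  by (metis M.abelian_group_axioms abelian_group.a_inv_closed
    abelian_group.l_neg abelian_group.r_neg1 abelian_group.r_neg2)

lemma proj:
  assumes a: "a \<in> endos R M act" and rk: "rickart_mod R M act"
  obtains z where "z \<in> carrier S" "z \<otimes>\<^bsub>S\<^esub> z = z" "a \<otimes>\<^bsub>S\<^esub> z = a"
    "\<And>n. n \<in> carrier M \<Longrightarrow> a n = \<zero>\<^bsub>M\<^esub> \<Longrightarrow> z n = \<zero>\<^bsub>M\<^esub>"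
proof -
  define K where "K = ker_endo M a"
  have ds: "direct_summand R M act K" using rk a unfolding rickart_mod_def K_def by blast
  then have sK: "submod R M act K" unfolding direct_summand_def by blast
  from ds obtain N where sN: "submod R M act N" and KN: "K \<inter> N = {\<zero>\<^bsub>M\<^esub>}"
    and dec: "\<And>m. m \<in> carrier M \<Longrightarrow> \<exists>k\<in>K. \<exists>b\<in>N. m = k \<oplus>\<^bsub>M\<^esub> b"
    unfolding direct_summand_def by blast
  have Kc: "K \<subseteq> carrier M" and Nc: "N \<subseteq> carrier M" using sK sN unfolding submod_def by auto
  have Kadd: "\<And>x y. x \<in> K \<Longrightarrow> y \<in> K \<Longrightarrow> x \<oplus>\<^bsub>M\<^esub> y \<in> K"
    and Kneg: "\<And>x. x \<in> K \<Longrightarrow> \<ominus>\<^bsub>M\<^esub> x \<in> K"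
    and Kact: "\<And>x r. x \<in> K \<Longrightarrow> r \<in> carrier R \<Longrightarrow> act x r \<in> K"
    and K0: "\<zero>\<^bsub>M\<^esub> \<in> K"
    using sK unfolding submod_def by auto
  have Nadd: "\<And>x y. x \<in> N \<Longrightarrow> y \<in> N \<Longrightarrow> x \<oplus>\<^bsub>M\<^esub> y \<in> N"
    and Nneg: "\<And>x. x \<in> N \<Longrightarrow> \<ominus>\<^bsub>M\<^esub> x \<in> N"
    and Nact: "\<And>x r. x \<in> N \<Longrightarrow> r \<in> carrier R \<Longrightarrow> act x r \<in> N"
    and N0: "\<zero>\<^bsub>M\<^esub> \<in> N"
    using sN unfolding submod_def by auto
  have uniq: "b1 = b2" if "k1 \<in> K" "k2 \<in> K" "b1 \<in> N" "b2 \<in> N" "k1 \<oplus>\<^bsub>M\<^esub> b1 = k2 \<oplus>\<^bsub>M\<^esub> b2"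
    for k1 k2 b1 b2
  proof -
    have e: "k1 \<oplus>\<^bsub>M\<^esub> \<ominus>\<^bsub>M\<^esub> k2 = b2 \<oplus>\<^bsub>M\<^esub> \<ominus>\<^bsub>M\<^esub> b1"
      using grp_aux that Kc Nc by blast
    have "k1 \<oplus>\<^bsub>M\<^esub> \<ominus>\<^bsub>M\<^esub> k2 \<in> K" using that Kadd Kneg by blast
    moreover have "b2 \<oplus>\<^bsub>M\<^esub> \<ominus>\<^bsub>M\<^esub> b1 \<in> N" using that Nadd Nneg by blast
    ultimately have "b2 \<oplus>\<^bsub>M\<^esub> \<ominus>\<^bsub>M\<^esub> b1 = \<zero>\<^bsub>M\<^esub>" using e KN by auto
    then show ?thesis using grp_aux2 that Nc by blast
  qed
  define z where "z = (\<lambda>m\<in>carrier M. THE b. b \<in> N \<and> (\<exists>k\<in>K. m = k \<oplus>\<^bsub>M\<^esub> b))"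
  have zval: "z (k \<oplus>\<^bsub>M\<^esub> b) = b" if "k \<in> K" "b \<in> N" for k b
  proof -
    have "(THE b'. b' \<in> N \<and> (\<exists>k'\<in>K. k \<oplus>\<^bsub>M\<^esub> b = k' \<oplus>\<^bsub>M\<^esub> b')) = b"
      apply (rule the_equality)
      using that uniq by auto
    then show ?thesis using that Kc Nc unfolding z_def by auto
  qed
  have zdec: "\<exists>k\<in>K. z m \<in> N \<and> m = k \<oplus>\<^bsub>M\<^esub> z m" if m: "m \<in> carrier M" for m
  proof -
    obtain k b where kb: "k \<in> K" "b \<in> N" "m = k \<oplus>\<^bsub>M\<^esub> b" using dec[OF m] by blast
    then have "z m = b" using zval by simp
    then show ?thesis using kb by blast
  qed
  have zc: "z m \<in> carrier M" if "m \<in> carrier M" for m using zdec[OF that] Nc by auto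
  have zS: "z \<in> carrier S"
    unfolding S_simps
  proof (rule endosI)
    show "\<And>m. m \<notin> carrier M \<Longrightarrow> z m = undefined" unfolding z_def by simp
    show "\<And>m. m \<in> carrier M \<Longrightarrow> z m \<in> carrier M" by (rule zc)
    fix m assume m: "m \<in> carrier M"
    obtain k where k: "k \<in> K" "z m \<in> N" "m = k \<oplus>\<^bsub>M\<^esub> z m" using zdec[OF m] by blast
    {
      fix n assume n: "n \<in> carrier M"
      obtain k' where k': "k' \<in> K" "z n \<in> N" "n = k' \<oplus>\<^bsub>M\<^esub> z n" using zdec[OF n] by blast
      have c: "k \<in> carrier M" "k' \<in> carrier M" "z m \<in> carrier M" "z n \<in> carrier M"
        using k k' Kc Nc by auto
      have "(k \<oplus>\<^bsub>M\<^esub> z m) \<oplus>\<^bsub>M\<^esub> (k' \<oplus>\<^bsub>M\<^esub> z n) = (k \<oplus>\<^bsub>M\<^esub> k') \<oplus>\<^bsub>M\<^esub> (z m \<oplus>\<^bsub>M\<^esub> z n)"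
        using c by (simp add: M.a_ac)
      then have "m \<oplus>\<^bsub>M\<^esub> n = (k \<oplus>\<^bsub>M\<^esub> k') \<oplus>\<^bsub>M\<^esub> (z m \<oplus>\<^bsub>M\<^esub> z n)"
        using k(3) k'(3) by simp
      then show "z (m \<oplus>\<^bsub>M\<^esub> n) = z m \<oplus>\<^bsub>M\<^esub> z n"
        using zval Kadd Nadd k k' by simp
    }
    {
      fix r assume r: "r \<in> carrier R"
      have c: "k \<in> carrier M" "z m \<in> carrier M" using k Kc Nc by auto
      have "act m r = act (k \<oplus>\<^bsub>M\<^esub> z m) r" using k(3) by simp
      also have "\<dots> = act k r \<oplus>\<^bsub>M\<^esub> act (z m) r" using act_add[OF c r] .
      finally have "act m r = act k r \<oplus>\<^bsub>M\<^esub> act (z m) r" .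
      then show "z (act m r) = act (z m) r" using zval Kact Nact k r by simp
    }
  qed
  have aK: "a k = \<zero>\<^bsub>M\<^esub>" if "k \<in> K" for k using that unfolding K_def ker_endo_def by simp
  show ?thesis
  proof
    show "z \<in> carrier S" by (rule zS)
    show "z \<otimes>\<^bsub>S\<^esub> z = z"
    proof (rule endo_eqI)
      show "z \<otimes>\<^bsub>S\<^esub> z \<in> endos R M act" using zS S.m_closed S_simps by metis
      show "z \<in> endos R M act" using zS S_simps by simp
      fix m assume m: "m \<in> carrier M"
      obtain k where k: "k \<in> K" "z m \<in> N" "m = k \<oplus>\<^bsub>M\<^esub> z m" using zdec[OF m] by blast
      have "z (z m) = z (\<zero>\<^bsub>M\<^esub> \<oplus>\<^bsub>M\<^esub> z m)" using zc[OF m] by simp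
      also have "\<dots> = z m" using zval K0 k by simp
      finally show "(z \<otimes>\<^bsub>S\<^esub> z) m = z m" using m by (simp add: S_mult_eval)
    qed
    show "a \<otimes>\<^bsub>S\<^esub> z = a"
    proof (rule endo_eqI)
      show "a \<otimes>\<^bsub>S\<^esub> z \<in> endos R M act" using zS a S.m_closed S_simps by metis
      show "a \<in> endos R M act" by (rule a)
      fix m assume m: "m \<in> carrier M"
      obtain k where k: "k \<in> K" "z m \<in> N" "m = k \<oplus>\<^bsub>M\<^esub> z m" using zdec[OF m] by blast
      have kc: "k \<in> carrier M" using k Kc by auto
      have "a m = a (k \<oplus>\<^bsub>M\<^esub> z m)" using k(3) by simp
      also have "\<dots> = a k \<oplus>\<^bsub>M\<^esub> a (z m)" using endo_add[OF a kc zc[OF m]] .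
      finally have "a m = a k \<oplus>\<^bsub>M\<^esub> a (z m)" .
      also have "\<dots> = a (z m)" using aK[OF k(1)] endo_closed[OF a zc[OF m]] by simp
      finally show "(a \<otimes>\<^bsub>S\<^esub> z) m = a m" using m by (simp add: S_mult_eval)
    qed
    fix n assume n: "n \<in> carrier M" and an: "a n = \<zero>\<^bsub>M\<^esub>"
    have nK: "n \<in> K" using n an unfolding K_def ker_endo_def by simp
    have "z n = z (n \<oplus>\<^bsub>M\<^esub> \<zero>\<^bsub>M\<^esub>)" using n by simp
    also have "\<dots> = \<zero>\<^bsub>M\<^esub>" using zval nK N0 by simp
    finally show "z n = \<zero>\<^bsub>M\<^esub>" .
  qed
qed

lemma main:
  assumes rk: "rickart_mod R M act" and ab: "abelian_mod R M act"
  shows "centrally_endo_AIP R M act"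
  unfolding centrally_endo_AIP_def
proof (intro allI impI)
  fix N assume fi: "fully_invariant R M act N"
  have Nc: "N \<subseteq> carrier M" and inv: "\<And>\<phi> n. \<phi> \<in> endos R M act \<Longrightarrow> n \<in> N \<Longrightarrow> \<phi> n \<in> N"
    using fi unfolding fully_invariant_def submod_def by blast+
  let ?I = "left_annihilator R M act N"
  have I_S: "?I \<subseteq> carrier S" unfolding left_annihilator_def S_simps by auto
  have memI: "x \<in> ?I \<longleftrightarrow> x \<in> carrier S \<and> (\<forall>n\<in>N. x n = \<zero>\<^bsub>M\<^esub>)" for x
    unfolding left_annihilator_def S_simps by auto
  have ideal: "ideal ?I S"
  proof (rule idealI[OF S_ring])
    show "subgroup ?I (add_monoid S)"
    proof (rule S.add.subgroupI)
      show "?I \<subseteq> carrier S" using I_S by simp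
      show "?I \<noteq> {}" using memI[of "\<zero>\<^bsub>S\<^esub>"] Nc by (auto simp: S_zero_eval)
      fix x y assume x: "x \<in> ?I" and y: "y \<in> ?I"
      show "\<ominus>\<^bsub>S\<^esub> x \<in> ?I"
        using x Nc unfolding memI by (auto simp: S_neg subsetD neg_endo S_simps)
      show "x \<oplus>\<^bsub>S\<^esub> y \<in> ?I"
        using x y Nc unfolding memI by (auto simp: S_simps add_endo subsetD)
    qed
    fix x s assume x: "x \<in> ?I" and s: "s \<in> carrier S"
    have xS: "x \<in> carrier S" using x memI by blast
    show "s \<otimes>\<^bsub>S\<^esub> x \<in> ?I" unfolding memI
    proof
      show "s \<otimes>\<^bsub>S\<^esub> x \<in> carrier S" using xS s by simp
      show "\<forall>n\<in>N. (s \<otimes>\<^bsub>S\<^esub> x) n = \<zero>\<^bsub>M\<^esub>"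
        using x s Nc unfolding memI by (auto simp: S_mult_eval endo_zero S_simps(1) subsetD)
    qed
    show "x \<otimes>\<^bsub>S\<^esub> s \<in> ?I" unfolding memI
    proof
      show "x \<otimes>\<^bsub>S\<^esub> s \<in> carrier S" using xS s by simp
      show "\<forall>n\<in>N. (x \<otimes>\<^bsub>S\<^esub> s) n = \<zero>\<^bsub>M\<^esub>"
        using x s Nc inv unfolding memI by (auto simp: S_mult_eval S_simps(1) subsetD)
    qed
  qed
  show "centrally_s_unital S ?I"
    unfolding centrally_s_unital_def
  proof (intro conjI ballI)
    show "ideal ?I S" by (rule ideal)
    fix a assume aI: "a \<in> ?I"
    then have aE: "a \<in> endos R M act" and aN: "\<And>n. n \<in> N \<Longrightarrow> a n = \<zero>\<^bsub>M\<^esub>"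
      unfolding memI S_simps by auto
    obtain z where z: "z \<in> carrier S" "z \<otimes>\<^bsub>S\<^esub> z = z" "a \<otimes>\<^bsub>S\<^esub> z = a"
      "\<And>n. n \<in> carrier M \<Longrightarrow> a n = \<zero>\<^bsub>M\<^esub> \<Longrightarrow> z n = \<zero>\<^bsub>M\<^esub>"
      using proj[OF aE rk] by blast
    show "\<exists>z\<in>?I. (\<forall>s\<in>carrier S. z \<otimes>\<^bsub>S\<^esub> s = s \<otimes>\<^bsub>S\<^esub> z) \<and> a \<otimes>\<^bsub>S\<^esub> z = a"
    proof (intro bexI conjI ballI)
      show "z \<in> ?I" using z Nc aN unfolding memI by auto
      show "a \<otimes>\<^bsub>S\<^esub> z = a" by (rule z(3))
      fix s assume "s \<in> carrier S"
      then show "z \<otimes>\<^bsub>S\<^esub> s = s \<otimes>\<^bsub>S\<^esub> z" using ab z unfolding abelian_mod_def by blast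
    qed
  qed
qed

end

theorem corollary2p3:
  fixes R :: "('a, 'b) ring_scheme" and M :: "('c, 'd) ring_scheme" and act :: "'c \<Rightarrow> 'a \<Rightarrow> 'c"
  assumes "right_module R M act"
    and "rickart_mod R M act"
    and "reduced_mod R M act \<or> rigid_mod R M act \<or> abelian_mod R M act \<or>
         semicommutative_mod R M act \<or> symmetric_mod R M act"
  shows "centrally_endo_AIP R M act"
proof -
  interpret rmod R M act by unfold_locales (rule assms(1))
  have "abelian_mod R M act"
    using assms(3) reduced_rigid rigid_abelian semicomm_abelian symm_abelian by blast
  then show ?thesis using main assms(2) by blast
qed

end
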